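(* Let $n=2k$ with $k\ge 2$. Then $W=\{c_1,v\}$ is a local resolving set of $U_n$, where $v=e_1$ if $k=2$, $v=c_2$ if $k=3$, $v=d_4$ if $k=4$, and $v=c_k$ if $k\ge 5$.
   Context: For $n\ge 3$, $U_n$ is the graph with vertex set $\{a_i,b_i,c_i,d_i,e_i : 1\le i\le n\}$ and edge set $\{a_ia_{i+1}, b_ib_{i+1}, e_ie_{i+1}, a_ib_i, b_ic_i, c_id_i, d_ie_i, c_{i+1}d_i : 1\le i\le n\}$, indices taken modulo $n$. A vertex $w$ resolves $u,v$ if $d(u,w)\neq d(v,w)$ ($d$ the graph distance). A set $W$ is a local resolving set if every two adjacent vertices are resolved by some element of $W$. *)

theory Defs
  imports Main
begin

datatype lbl = LA | LB | LC | LD | LE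

type_synonym vtx = "lbl \<times> nat"

text \<open>Vertex (LA, i) stands for a_i, etc., with 1 <= i <= n.\<close>

definition nxt :: "nat \<Rightarrow> nat \<Rightarrow> nat" where
  "nxt n i = i mod n + 1"

definition U_verts :: "nat \<Rightarrow> vtx set" where
  "U_verts n = UNIV \<times> {1..n}"

definition U_edges :: "nat \<Rightarrow> (vtx \<times> vtx) set" where
  "U_edges n = (\<Union>i\<in>{1..n}.
     {((LA,i),(LA,nxt n i)), ((LB,i),(LB,nxt n i)), ((LE,i),(LE,nxt n i)),
      ((LA,i),(LB,i)), ((LB,i),(LC,i)), ((LC,i),(LD,i)), ((LD,i),(LE,i)),
      ((LC,nxt n i),(LD,i))})"

definition U_adj :: "nat \<Rightarrow> vtx \<Rightarrow> vtx \<Rightarrow> bool" where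
  "U_adj n u v \<longleftrightarrow> (u, v) \<in> U_edges n \<or> (v, u) \<in> U_edges n"

fun walk_of_len :: "('a \<Rightarrow> 'a \<Rightarrow> bool) \<Rightarrow> nat \<Rightarrow> 'a \<Rightarrow> 'a \<Rightarrow> bool" where
  "walk_of_len adj 0 u v \<longleftrightarrow> u = v"
| "walk_of_len adj (Suc k) u v \<longleftrightarrow> (\<exists>w. adj u w \<and> walk_of_len adj k w v)"

text \<open>Graph distance: length of a shortest walk (the graphs considered are connected).\<close>
definition gdist :: "('a \<Rightarrow> 'a \<Rightarrow> bool) \<Rightarrow> 'a \<Rightarrow> 'a \<Rightarrow> nat" where
  "gdist adj u v = (LEAST k. walk_of_len adj k u v)"

definition resolves :: "('a \<Rightarrow> 'a \<Rightarrow> bool) \<Rightarrow> 'a \<Rightarrow> 'a \<Rightarrow> 'a \<Rightarrow> bool" where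
  "resolves adj w u v \<longleftrightarrow> gdist adj u w \<noteq> gdist adj v w"

definition local_resolving_set :: "'a set \<Rightarrow> ('a \<Rightarrow> 'a \<Rightarrow> bool) \<Rightarrow> 'a set \<Rightarrow> bool" where
  "local_resolving_set V adj W \<longleftrightarrow> W \<subseteq> V \<and>
     (\<forall>u\<in>V. \<forall>v\<in>V. adj u v \<longrightarrow> (\<exists>w\<in>W. resolves adj w u v))"

end

theory Submission
  imports Defs
begin

lemma walk_lower:
  assumes closed: "\<And>u w. adj u w \<Longrightarrow> u \<in> V \<Longrightarrow> w \<in> V"
    and lip: "\<And>u w. adj u w \<Longrightarrow> u \<in> V \<Longrightarrow> f u \<le> f w + 1"
    and fs: "f s = 0"
  shows "walk_of_len adj k u s \<Longrightarrow> u \<in> V \<Longrightarrow> f u \<le> k"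
proof (induction k arbitrary: u)
  case 0 then show ?case using fs by simp
next
  case (Suc k)
  then obtain w where "adj u w" "walk_of_len adj k w s" by auto
  moreover have "w \<in> V" using closed Suc calculation by blast
  ultimately have "f w \<le> k" using Suc by blast
  then show ?case using lip[OF \<open>adj u w\<close> Suc.prems(2)] by simp
qed

lemma walk_upper:
  assumes closed: "\<And>u w. adj u w \<Longrightarrow> u \<in> V \<Longrightarrow> w \<in> V"
    and desc: "\<And>u. u \<in> V \<Longrightarrow> 0 < f u \<Longrightarrow> \<exists>w. adj u w \<and> f w + 1 = f u"
    and zero: "\<And>u. u \<in> V \<Longrightarrow> f u = 0 \<Longrightarrow> u = s"
  shows "f u = k \<Longrightarrow> u \<in> V \<Longrightarrow> walk_of_len adj k u s"
proof (induction k arbitrary: u)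
  case 0 then show ?case using zero by simp
next
  case (Suc k)
  then obtain w where "adj u w" "f w + 1 = f u" using desc by fastforce
  moreover have "w \<in> V" using closed Suc calculation by blast
  ultimately show ?case using Suc by auto
qed

lemma dist_eq:
  assumes closed: "\<And>u w. adj u w \<Longrightarrow> u \<in> V \<Longrightarrow> w \<in> V"
    and lip: "\<And>u w. adj u w \<Longrightarrow> u \<in> V \<Longrightarrow> f u \<le> f w + 1"
    and desc: "\<And>u. u \<in> V \<Longrightarrow> 0 < f u \<Longrightarrow> \<exists>w. adj u w \<and> f w + 1 = f u"
    and zero: "\<And>u. u \<in> V \<Longrightarrow> f u = 0 \<Longrightarrow> u = s"
    and fs: "f s = 0"
    and uV: "u \<in> V"
  shows "gdist adj u s = f u"
  unfolding gdist_def
proof (rule Least_equality)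
  show "walk_of_len adj (f u) u s" using walk_upper[where adj=adj and V=V and f=f and s=s and k="f u" and u=u] closed desc zero uV by blast
  show "\<And>y. walk_of_len adj y u s \<Longrightarrow> f u \<le> y" using walk_lower[where adj=adj and V=V and f=f and s=s] closed lip fs uV by blast
qed

definition cC :: "nat \<Rightarrow> nat \<Rightarrow> nat" where
  "cC n t = (if t = 0 then 0 else if t = 1 \<or> t + 1 = n then 2 else 2 + min t (n - t))"

definition dc :: "nat \<Rightarrow> lbl \<Rightarrow> nat \<Rightarrow> nat" where
  "dc n L t = (case L of LA \<Rightarrow> 2 + min t (n - t) | LB \<Rightarrow> 1 + min t (n - t)
     | LC \<Rightarrow> cC n t | LD \<Rightarrow> 1 + min (cC n t) (cC n (if t + 1 = n then 0 else t + 1))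
     | LE \<Rightarrow> 2 + min t (n - 1 - t))"

definition sh :: "nat \<Rightarrow> nat \<Rightarrow> nat \<Rightarrow> nat" where
  "sh n s i = (if s \<le> i then i - s else i + n - s)"

definition fC :: "nat \<Rightarrow> nat \<Rightarrow> vtx \<Rightarrow> nat" where
  "fC n s u = dc n (fst u) (sh n s (snd u))"

lemma nxt_eq: "i \<in> {1..n} \<Longrightarrow> nxt n i = (if i < n then i + 1 else 1)"
  by (auto simp: nxt_def)



definition sc :: "nat \<Rightarrow> nat \<Rightarrow> nat" where "sc n t = (if t + 1 = n then 0 else t + 1)"

lemma sh_nxt: "i \<in> {1..n} \<Longrightarrow> s \<in> {1..n} \<Longrightarrow> sh n s (nxt n i) = sc n (sh n s i)"
  by (auto simp: nxt_eq sh_def sc_def)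

lemma sh_lt: "i \<in> {1..n} \<Longrightarrow> s \<in> {1..n} \<Longrightarrow> sh n s i < n"
  by (auto simp: sh_def)

lemma tA: "n \<ge> 3 \<Longrightarrow> t < n \<Longrightarrow> dc n LA t \<le> dc n LA (sc n t) + 1 \<and> dc n LA (sc n t) \<le> dc n LA t + 1"
  by (simp add: dc_def sc_def min_def; arith?)
lemma tB: "n \<ge> 3 \<Longrightarrow> t < n \<Longrightarrow> dc n LB t \<le> dc n LB (sc n t) + 1 \<and> dc n LB (sc n t) \<le> dc n LB t + 1"
  by (simp add: dc_def sc_def min_def; arith?)
lemma tE: "n \<ge> 3 \<Longrightarrow> t < n \<Longrightarrow> dc n LE t \<le> dc n LE (sc n t) + 1 \<and> dc n LE (sc n t) \<le> dc n LE t + 1"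
  by (simp add: dc_def sc_def min_def; arith?)
lemma tAB: "n \<ge> 3 \<Longrightarrow> t < n \<Longrightarrow> dc n LA t \<le> dc n LB t + 1 \<and> dc n LB t \<le> dc n LA t + 1"
  by (simp add: dc_def; arith?)
lemma tBC: "n \<ge> 3 \<Longrightarrow> t < n \<Longrightarrow> dc n LB t \<le> dc n LC t + 1 \<and> dc n LC t \<le> dc n LB t + 1"
  by (simp add: dc_def cC_def min_def; arith?)
lemma tCD: "n \<ge> 3 \<Longrightarrow> t < n \<Longrightarrow> dc n LC t \<le> dc n LD t + 1 \<and> dc n LD t \<le> dc n LC t + 1"
  by (simp add: dc_def cC_def sc_def min_def; arith?)
lemma tDE: "n \<ge> 3 \<Longrightarrow> t < n \<Longrightarrow> dc n LD t \<le> dc n LE t + 1 \<and> dc n LE t \<le> dc n LD t + 1"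
  by (simp add: dc_def cC_def sc_def min_def; arith?)
lemma tCD2: "n \<ge> 3 \<Longrightarrow> t < n \<Longrightarrow> dc n LC (sc n t) \<le> dc n LD t + 1 \<and> dc n LD t \<le> dc n LC (sc n t) + 1"
  by (simp add: dc_def cC_def sc_def min_def; arith?)
lemma tall: "n \<ge> 3 \<Longrightarrow> t < n \<Longrightarrow>
  (dc n LA t \<le> dc n LA (sc n t) + 1 \<and> dc n LA (sc n t) \<le> dc n LA t + 1) \<and>
  (dc n LB t \<le> dc n LB (sc n t) + 1 \<and> dc n LB (sc n t) \<le> dc n LB t + 1) \<and>
  (dc n LE t \<le> dc n LE (sc n t) + 1 \<and> dc n LE (sc n t) \<le> dc n LE t + 1) \<and>
  (dc n LA t \<le> dc n LB t + 1 \<and> dc n LB t \<le> dc n LA t + 1) \<and>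
  (dc n LB t \<le> dc n LC t + 1 \<and> dc n LC t \<le> dc n LB t + 1) \<and>
  (dc n LC t \<le> dc n LD t + 1 \<and> dc n LD t \<le> dc n LC t + 1) \<and>
  (dc n LD t \<le> dc n LE t + 1 \<and> dc n LE t \<le> dc n LD t + 1) \<and>
  (dc n LC (sc n t) \<le> dc n LD t + 1 \<and> dc n LD t \<le> dc n LC (sc n t) + 1)"
  using tA[of n t] tB[of n t] tE[of n t] tAB[of n t] tBC[of n t] tCD[of n t] tDE[of n t] tCD2[of n t] by simp

lemma lipC:
  assumes "n \<ge> 3" "s \<in> {1..n}" "U_adj n u w"
  shows "fC n s u \<le> fC n s w + 1"
proof -
  have H: "\<And>i. 1 \<le> i \<Longrightarrow> i \<le> n \<Longrightarrow> (let t = sh n s i in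
  (dc n LA t \<le> dc n LA (sc n t) + 1 \<and> dc n LA (sc n t) \<le> dc n LA t + 1) \<and>
  (dc n LB t \<le> dc n LB (sc n t) + 1 \<and> dc n LB (sc n t) \<le> dc n LB t + 1) \<and>
  (dc n LE t \<le> dc n LE (sc n t) + 1 \<and> dc n LE (sc n t) \<le> dc n LE t + 1) \<and>
  (dc n LA t \<le> dc n LB t + 1 \<and> dc n LB t \<le> dc n LA t + 1) \<and>
  (dc n LB t \<le> dc n LC t + 1 \<and> dc n LC t \<le> dc n LB t + 1) \<and>
  (dc n LC t \<le> dc n LD t + 1 \<and> dc n LD t \<le> dc n LC t + 1) \<and>
  (dc n LD t \<le> dc n LE t + 1 \<and> dc n LE t \<le> dc n LD t + 1) \<and>
  (dc n LC (sc n t) \<le> dc n LD t + 1 \<and> dc n LD t \<le> dc n LC (sc n t) + 1))"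
    unfolding Let_def using tall[OF assms(1) sh_lt] assms(2) by simp
  from assms(3) obtain i where i: "1 \<le> i" "i \<le> n" and
    c: "(u,w) \<in> {((LA,i),(LA,nxt n i)), ((LB,i),(LB,nxt n i)), ((LE,i),(LE,nxt n i)),
      ((LA,i),(LB,i)), ((LB,i),(LC,i)), ((LC,i),(LD,i)), ((LD,i),(LE,i)),
      ((LC,nxt n i),(LD,i))} \<or> (w,u) \<in> {((LA,i),(LA,nxt n i)), ((LB,i),(LB,nxt n i)), ((LE,i),(LE,nxt n i)),
      ((LA,i),(LB,i)), ((LB,i),(LC,i)), ((LC,i),(LD,i)), ((LD,i),(LE,i)),
      ((LC,nxt n i),(LD,i))}"
    unfolding U_adj_def U_edges_def by auto
  have sn: "sh n s (nxt n i) = sc n (sh n s i)" using sh_nxt i assms(2) by simp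
  note H' = H[OF i, unfolded Let_def]
  from c show ?thesis
    apply (simp only: insert_iff empty_iff prod.inject simp_thms)
    apply (elim disjE conjE)
    apply (insert H')
    apply (simp_all add: fC_def sn)
    done
qed
definition pc :: "nat \<Rightarrow> nat \<Rightarrow> nat" where "pc n t = (if t = 0 then n - 1 else t - 1)"
definition prv :: "nat \<Rightarrow> nat \<Rightarrow> nat" where "prv n i = (if i = 1 then n else i - 1)"

lemma prv_in: "i \<in> {1..n} \<Longrightarrow> prv n i \<in> {1..n}" by (auto simp: prv_def)
lemma nxt_in: "i \<in> {1..n} \<Longrightarrow> nxt n i \<in> {1..n}" by (auto simp: nxt_eq)
lemma nxt_prv: "i \<in> {1..n} \<Longrightarrow> nxt n (prv n i) = i" by (cases "i = 1") (auto simp: prv_def nxt_def)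
lemma sh_prv: "i \<in> {1..n} \<Longrightarrow> s \<in> {1..n} \<Longrightarrow> sh n s (prv n i) = pc n (sh n s i)"
  by (auto simp: prv_def sh_def pc_def)

lemma vB0: "dc n LC 0 + 1 = dc n LB 0" by (simp add: dc_def cC_def)
lemma vBp: "0 < t \<Longrightarrow> t \<le> n - t \<Longrightarrow> t < n \<Longrightarrow> dc n LB (pc n t) + 1 = dc n LB t"
  by (simp add: dc_def pc_def min_def; arith?)
lemma vBq: "\<not> t \<le> n - t \<Longrightarrow> t < n \<Longrightarrow> dc n LB (sc n t) + 1 = dc n LB t"
  by (simp add: dc_def sc_def min_def; arith?)
lemma vA: "dc n LB t + 1 = dc n LA t" by (simp add: dc_def)
lemma vC1: "n \<ge> 3 \<Longrightarrow> dc n LD (pc n 1) + 1 = dc n LC 1"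
  by (simp add: dc_def pc_def cC_def sc_def min_def; arith?)
lemma vCn: "n \<ge> 3 \<Longrightarrow> dc n LD (n - 1) + 1 = dc n LC (n - 1)"
  by (simp add: dc_def cC_def sc_def min_def; arith?)
lemma vCB: "t \<noteq> 0 \<Longrightarrow> t \<noteq> 1 \<Longrightarrow> t \<noteq> n - 1 \<Longrightarrow> t < n \<Longrightarrow> dc n LB t + 1 = dc n LC t"
  by (simp add: dc_def cC_def min_def; arith?)
lemma vD1: "cC n t \<le> cC n (sc n t) \<Longrightarrow> dc n LC t + 1 = dc n LD t"
  by (simp add: dc_def sc_def min_def)
lemma vD2: "\<not> cC n t \<le> cC n (sc n t) \<Longrightarrow> dc n LC (sc n t) + 1 = dc n LD t"
  by (simp add: dc_def sc_def min_def)
lemma vE0: "n \<ge> 3 \<Longrightarrow> t = 0 \<or> t = n - 1 \<Longrightarrow> dc n LD t + 1 = dc n LE t"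
  by (auto simp: dc_def cC_def sc_def min_def)
lemma vEp: "0 < t \<Longrightarrow> t < n - 1 \<Longrightarrow> t \<le> n - 1 - t \<Longrightarrow> dc n LE (pc n t) + 1 = dc n LE t"
  by (simp add: dc_def pc_def min_def; arith?)
lemma vEq: "0 < t \<Longrightarrow> t < n - 1 \<Longrightarrow> \<not> t \<le> n - 1 - t \<Longrightarrow> dc n LE (sc n t) + 1 = dc n LE t"
  by (simp add: dc_def sc_def min_def; arith?)
lemma dcC0: "dc n LC t = 0 \<longleftrightarrow> t = 0" by (simp add: dc_def cC_def)

lemma adj_sym: "U_adj n u w \<Longrightarrow> U_adj n w u" by (auto simp: U_adj_def)
lemma adj_e:
  assumes i: "i \<in> {1..n}"
  shows "U_adj n (LA,i) (LA,nxt n i)" "U_adj n (LB,i) (LB,nxt n i)" "U_adj n (LE,i) (LE,nxt n i)"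
    "U_adj n (LA,i) (LB,i)" "U_adj n (LB,i) (LC,i)" "U_adj n (LC,i) (LD,i)" "U_adj n (LD,i) (LE,i)"
    "U_adj n (LC,nxt n i) (LD,i)"
    "U_adj n (LA,nxt n i) (LA,i)" "U_adj n (LB,nxt n i) (LB,i)" "U_adj n (LE,nxt n i) (LE,i)"
    "U_adj n (LB,i) (LA,i)" "U_adj n (LC,i) (LB,i)" "U_adj n (LD,i) (LC,i)" "U_adj n (LE,i) (LD,i)"
    "U_adj n (LD,i) (LC,nxt n i)"
  unfolding U_adj_def U_edges_def by (rule disjI1 disjI2, rule UN_I[OF i], simp)+

lemma descC:
  assumes n: "n \<ge> 3" and s: "s \<in> {1..n}" and i: "i \<in> {1..n}" and pos: "0 < fC n s (L,i)"
  shows "\<exists>w. U_adj n (L,i) w \<and> fC n s w + 1 = fC n s (L,i)"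
proof -
  define t where "t = sh n s i"
  have tn: "t < n" using sh_lt[OF i s] t_def by simp
  define p where "p = prv n i"
  define q where "q = nxt n i"
  have pi: "p \<in> {1..n}" using prv_in[OF i] p_def by simp
  have np: "nxt n p = i" using nxt_prv[OF i] p_def by simp
  have tp: "sh n s p = pc n t" using sh_prv[OF i s] p_def t_def by simp
  have tq: "sh n s q = sc n t" using sh_nxt[OF i s] q_def t_def by simp
  have ap: "U_adj n (L',i) (L',p)" if "L' \<in> {LA,LB,LE}" for L'
    using adj_e(9-11)[OF pi] np that by auto
  have aq: "U_adj n (L',i) (L',q)" if "L' \<in> {LA,LB,LE}" for L'
    using adj_e(1-3)[OF i] q_def that by auto
  have av: "U_adj n (LA,i) (LB,i)" "U_adj n (LB,i) (LA,i)" "U_adj n (LB,i) (LC,i)" "U_adj n (LC,i) (LB,i)"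
     "U_adj n (LC,i) (LD,i)" "U_adj n (LD,i) (LC,i)" "U_adj n (LD,i) (LE,i)" "U_adj n (LE,i) (LD,i)"
     "U_adj n (LD,i) (LC,q)" using adj_e[OF i] q_def by auto
  have acp: "U_adj n (LC,i) (LD,p)" using adj_e(8)[OF pi] np adj_sym by metis
  have f: "fC n s (L',j) = dc n L' (sh n s j)" for L' j by (simp add: fC_def)
  show ?thesis
  proof (cases L)
    case LA then show ?thesis using av(1) vA[of n t] by (auto simp: f t_def)
  next
    case LB
    show ?thesis
    proof (cases "t = 0")
      case True then show ?thesis using LB av(3) vB0[of n] by (intro exI[of _ "(LC,i)"]) (auto simp: f t_def)
    next
      case False
      show ?thesis
      proof (cases "t \<le> n - t")
        case True then show ?thesis using LB False ap[of LB] vBp[of t n] tn tp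
          by (intro exI[of _ "(LB,p)"]) (auto simp: f t_def)
      next
        case c: False then show ?thesis using LB aq[of LB] vBq[of t n] tn tq
          by (intro exI[of _ "(LB,q)"]) (auto simp: f t_def)
      qed
    qed
  next
    case LC
    have t0: "t \<noteq> 0" using pos LC dcC0[of n t] by (simp add: f t_def)
    show ?thesis
    proof (cases "t = 1")
      case True then show ?thesis using LC acp vC1[OF n] tp
        by (intro exI[of _ "(LD,p)"]) (auto simp: f t_def)
    next
      case c1: False
      show ?thesis
      proof (cases "t = n - 1")
        case True then show ?thesis using LC av(5) vCn[OF n]
          by (intro exI[of _ "(LD,i)"]) (auto simp: f t_def)
      next
        case False then show ?thesis using LC av(4) vCB[of t n] t0 c1 tn
          by (intro exI[of _ "(LB,i)"]) (auto simp: f t_def)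
      qed
    qed
  next
    case LD
    show ?thesis
    proof (cases "cC n t \<le> cC n (sc n t)")
      case True then show ?thesis using LD av(6) vD1[of n t]
        by (intro exI[of _ "(LC,i)"]) (auto simp: f t_def)
    next
      case False then show ?thesis using LD av(9) vD2[of n t] tq
        by (intro exI[of _ "(LC,q)"]) (auto simp: f t_def)
    qed
  next
    case LE
    show ?thesis
    proof (cases "t = 0 \<or> t = n - 1")
      case True then show ?thesis using LE av(8) vE0[OF n, of t]
        by (intro exI[of _ "(LD,i)"]) (auto simp: f t_def)
    next
      case c: False
      show ?thesis
      proof (cases "t \<le> n - 1 - t")
        case True then show ?thesis using LE c ap[of LE] vEp[of t n] tn tp
          by (intro exI[of _ "(LE,p)"]) (auto simp: f t_def)
      next
        case False then show ?thesis using LE c aq[of LE] vEq[of t n] tn tq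
          by (intro exI[of _ "(LE,q)"]) (auto simp: f t_def)
      qed
    qed
  qed
qed
lemma fB: "n = 2 * k \<Longrightarrow> t < n \<Longrightarrow> dc n LB t = (if t \<le> k then 1 + t else 1 + n - t)"
  by (simp add: dc_def min_def; arith?)
lemma fA: "n = 2 * k \<Longrightarrow> t < n \<Longrightarrow> dc n LA t = (if t \<le> k then 2 + t else 2 + n - t)"
  by (simp add: dc_def min_def; arith?)
lemma fE: "n = 2 * k \<Longrightarrow> t < n \<Longrightarrow> dc n LE t = (if t + 1 \<le> k then 2 + t else 1 + n - t)"
  by (simp add: dc_def min_def; arith?)
lemma fCC: "n = 2 * k \<Longrightarrow> k \<ge> 2 \<Longrightarrow> t < n \<Longrightarrow> cC n t = (if t = 0 then 0 else if t = 1 \<or> t + 1 = n then 2 else if t \<le> k then 2 + t else 2 + n - t)"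
  by (simp add: cC_def min_def; arith?)
lemma fC': "n = 2 * k \<Longrightarrow> k \<ge> 2 \<Longrightarrow> t < n \<Longrightarrow> dc n LC t = (if t = 0 then 0 else if t = 1 \<or> t + 1 = n then 2 else if t \<le> k then 2 + t else 2 + n - t)"
  by (simp add: dc_def fCC)
lemma fD: assumes "n = 2 * k" "k \<ge> 2" "t < n"
  shows "dc n LD t = (if t = 0 \<or> t + 1 = n then 1 else if t = 1 \<or> t + 2 = n then 3 else if t + 1 \<le> k then 3 + t else 2 + n - t)"
proof -
  have sl: "sc n t < n" using assms by (simp add: sc_def)
  have d: "dc n LD t = 1 + min (cC n t) (cC n (sc n t))" by (simp add: dc_def sc_def)
  show ?thesis unfolding d fCC[OF assms] fCC[OF assms(1,2) sl] using assms by (auto simp: sc_def min_def)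
qed
lemma sc_lt: "t < n \<Longrightarrow> sc n t < n" by (simp add: sc_def)

lemma rAA: "n = 2 * k \<Longrightarrow> k \<ge> 2 \<Longrightarrow> t < n \<Longrightarrow> dc n LA t \<noteq> dc n LA (sc n t)"
  by (simp add: fA sc_lt; simp add: sc_def; arith?)
lemma rBB: "n = 2 * k \<Longrightarrow> k \<ge> 2 \<Longrightarrow> t < n \<Longrightarrow> dc n LB t \<noteq> dc n LB (sc n t)"
  by (simp add: fB sc_lt; simp add: sc_def; arith?)
lemma rAB: "dc n LA t \<noteq> dc n LB t"
  by (simp add: dc_def)
lemma rEE: "n = 2 * k \<Longrightarrow> k \<ge> 2 \<Longrightarrow> t < n \<Longrightarrow> dc n LE t = dc n LE (sc n t) \<Longrightarrow> t = k - 1 \<or> t = n - 1"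
  by (simp add: fE sc_lt; simp add: sc_def split: if_splits; arith?)
lemma rBC: "n = 2 * k \<Longrightarrow> k \<ge> 2 \<Longrightarrow> t < n \<Longrightarrow> dc n LB t = dc n LC t \<Longrightarrow> t = 1 \<or> t = n - 1"
  by (simp add: fB fC' split: if_splits; arith?)
lemma rCD: "n = 2 * k \<Longrightarrow> k \<ge> 2 \<Longrightarrow> t < n \<Longrightarrow> dc n LC t = dc n LD t \<Longrightarrow> k \<le> t \<and> t + 3 \<le> n"
  by (simp add: fD fC' split: if_splits; arith?)
lemma rDE: "n = 2 * k \<Longrightarrow> k \<ge> 2 \<Longrightarrow> t < n \<Longrightarrow> dc n LD t = dc n LE t \<Longrightarrow> t = 1 \<or> t + 2 = n"
  by (simp add: fD fE split: if_splits; arith?)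
lemma rCD2: "n = 2 * k \<Longrightarrow> k \<ge> 2 \<Longrightarrow> t < n \<Longrightarrow> dc n LC (sc n t) = dc n LD t \<Longrightarrow> 2 \<le> t \<and> t + 1 \<le> k"
  by (simp add: fD fC' sc_lt; simp add: sc_def split: if_splits; arith?)
definition E8 :: "nat \<Rightarrow> nat \<Rightarrow> (vtx \<times> vtx) set" where
  "E8 n i = {((LA,i),(LA,nxt n i)), ((LB,i),(LB,nxt n i)), ((LE,i),(LE,nxt n i)),
      ((LA,i),(LB,i)), ((LB,i),(LC,i)), ((LC,i),(LD,i)), ((LD,i),(LE,i)),
      ((LC,nxt n i),(LD,i))}"

lemma sepG:
  assumes k: "k \<ge> 2" and n: "n = 2 * k" and s: "s \<in> {1..n}" and i: "i \<in> {1..n}"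
    and e: "(x,y) \<in> E8 n i"
    and H1: "(sh n 1 i = k - 1 \<or> sh n 1 i = n - 1) \<Longrightarrow> (sh n s i = k - 1 \<or> sh n s i = n - 1) \<Longrightarrow> False"
    and H2: "(sh n 1 i = 1 \<or> sh n 1 i = n - 1) \<Longrightarrow> (sh n s i = 1 \<or> sh n s i = n - 1) \<Longrightarrow> False"
    and H3: "(k \<le> sh n 1 i \<and> sh n 1 i + 3 \<le> n) \<Longrightarrow> (k \<le> sh n s i \<and> sh n s i + 3 \<le> n) \<Longrightarrow> False"
    and H4: "(sh n 1 i = 1 \<or> sh n 1 i + 2 = n) \<Longrightarrow> (sh n s i = 1 \<or> sh n s i + 2 = n) \<Longrightarrow> False"
    and H5: "(2 \<le> sh n 1 i \<and> sh n 1 i + 1 \<le> k) \<Longrightarrow> (2 \<le> sh n s i \<and> sh n s i + 1 \<le> k) \<Longrightarrow> False"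
  shows "fC n 1 x \<noteq> fC n 1 y \<or> fC n s x \<noteq> fC n s y"
proof -
  have s1: "(1::nat) \<in> {1..n}" using n k by simp
  have l1: "sh n 1 i < n" using sh_lt[OF i s1] .
  have l2: "sh n s i < n" using sh_lt[OF i s] .
  have q1: "sh n 1 (nxt n i) = sc n (sh n 1 i)" using sh_nxt[OF i s1] .
  have q2: "sh n s (nxt n i) = sc n (sh n s i)" using sh_nxt[OF i s] .
  from e show ?thesis
    apply (simp only: E8_def insert_iff empty_iff prod.inject simp_thms)
    apply (elim disjE conjE)
    apply (simp_all only: fC_def fst_conv snd_conv q1 q2)
    using rAA[OF n k l1] apply blast
    using rBB[OF n k l1] apply blast
    using rEE[OF n k l1] rEE[OF n k l2] H1 apply blast
    using rAB apply blast
    using rBC[OF n k l1] rBC[OF n k l2] H2 apply blast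
    using rCD[OF n k l1] rCD[OF n k l2] H3 apply blast
    using rDE[OF n k l1] rDE[OF n k l2] H4 apply blast
    using rCD2[OF n k l1] rCD2[OF n k l2] H5 apply blast
    done
qed
lemma UE: "U_edges n = (\<Union>i\<in>{1..n}. E8 n i)" unfolding U_edges_def E8_def by (rule refl)

lemma adj_iff: "U_adj n u v \<longleftrightarrow> (\<exists>i\<in>{1..n}. (u,v) \<in> E8 n i \<or> (v,u) \<in> E8 n i)"
  unfolding U_adj_def UE by blast

lemma E8_V: "i \<in> {1..n} \<Longrightarrow> (x,y) \<in> E8 n i \<Longrightarrow> x \<in> U_verts n \<and> y \<in> U_verts n"
  using nxt_in[of i n] by (auto simp: E8_def U_verts_def)

lemma closedV: "U_adj n u w \<Longrightarrow> w \<in> U_verts n"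
proof -
  assume "U_adj n u w"
  then obtain i where "i \<in> {1..n}" "(u,w) \<in> E8 n i \<or> (w,u) \<in> E8 n i" unfolding adj_iff by blast
  then show ?thesis using E8_V by blast
qed

lemma distC:
  assumes n: "n \<ge> 3" and s: "s \<in> {1..n}" and u: "u \<in> U_verts n"
  shows "gdist (U_adj n) u (LC,s) = fC n s u"
proof (rule dist_eq[where V = "U_verts n"])
  show "\<And>u w. U_adj n u w \<Longrightarrow> u \<in> U_verts n \<Longrightarrow> w \<in> U_verts n" using closedV by blast
  show "\<And>u w. U_adj n u w \<Longrightarrow> u \<in> U_verts n \<Longrightarrow> fC n s u \<le> fC n s w + 1" using lipC[OF n s] by blast
  show "\<And>u. u \<in> U_verts n \<Longrightarrow> 0 < fC n s u \<Longrightarrow> \<exists>w. U_adj n u w \<and> fC n s w + 1 = fC n s u"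
    using descC[OF n s] by (auto simp: U_verts_def)
  show "\<And>u. u \<in> U_verts n \<Longrightarrow> fC n s u = 0 \<Longrightarrow> u = (LC,s)"
  proof -
    fix u assume uV: "u \<in> U_verts n" and z: "fC n s u = 0"
    obtain L i where ui: "u = (L,i)" and i: "i \<in> {1..n}" using uV by (cases u) (auto simp: U_verts_def)
    have "L = LC" using z ui by (cases L) (auto simp: fC_def dc_def)
    moreover have "sh n s i = 0" using z ui calculation by (simp add: fC_def dcC0)
    ultimately show "u = (LC,s)" using ui i s by (auto simp: sh_def split: if_splits)
  qed
  show "fC n s (LC,s) = 0" by (simp add: fC_def dc_def cC_def sh_def)
  show "u \<in> U_verts n" by (rule u)
qed

definition nb :: "nat \<Rightarrow> vtx \<Rightarrow> vtx list" where
  "nb n u = (case u of (L,i) \<Rightarrow> (case L of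
     LA \<Rightarrow> [(LA,nxt n i),(LA,prv n i),(LB,i)]
   | LB \<Rightarrow> [(LB,nxt n i),(LB,prv n i),(LA,i),(LC,i)]
   | LC \<Rightarrow> [(LB,i),(LD,i),(LD,prv n i)]
   | LD \<Rightarrow> [(LC,i),(LE,i),(LC,nxt n i)]
   | LE \<Rightarrow> [(LE,nxt n i),(LE,prv n i),(LD,i)]))"

lemma nb_adj:
  assumes i: "i \<in> {1..n}" and w: "w \<in> set (nb n (L,i))"
  shows "U_adj n (L,i) w"
proof -
  have pi: "prv n i \<in> {1..n}" using prv_in[OF i] .
  have np: "nxt n (prv n i) = i" using nxt_prv[OF i] .
  note a = adj_e[OF i] and b = adj_e[OF pi, unfolded np]
  show ?thesis using w a b by (cases L) (auto simp: nb_def)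
qed

lemma all_lbl: "(\<forall>L. P L) \<longleftrightarrow> P LA \<and> P LB \<and> P LC \<and> P LD \<and> P LE"
  by (metis lbl.exhaust)

lemma dist_tab:
  assumes n: "n \<ge> 1"
    and L1: "\<forall>i\<in>{1..n}. \<forall>(x,y)\<in>E8 n i. f x \<le> f y + 1 \<and> f y \<le> f x + 1"
    and D1: "\<forall>i\<in>{1..n}. \<forall>L. 0 < f (L,i) \<longrightarrow> (\<exists>w\<in>set (nb n (L,i)). f w + 1 = f (L,i))"
    and Z: "\<forall>i\<in>{1..n}. \<forall>L. f (L,i) = 0 \<longrightarrow> (L,i) = s"
    and fs: "f s = 0"
    and u: "u \<in> U_verts n"
  shows "gdist (U_adj n) u s = f u"
proof (rule dist_eq[where V = "U_verts n"])
  show "\<And>u w. U_adj n u w \<Longrightarrow> u \<in> U_verts n \<Longrightarrow> w \<in> U_verts n" using closedV by blast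
  show "\<And>u w. U_adj n u w \<Longrightarrow> u \<in> U_verts n \<Longrightarrow> f u \<le> f w + 1"
    unfolding adj_iff using L1 by fastforce
  show "\<And>u. u \<in> U_verts n \<Longrightarrow> 0 < f u \<Longrightarrow> \<exists>w. U_adj n u w \<and> f w + 1 = f u"
  proof -
    fix u assume uV: "u \<in> U_verts n" and p: "0 < f u"
    obtain L i where ui: "u = (L,i)" and i: "i \<in> {1..n}" using uV by (cases u) (auto simp: U_verts_def)
    then obtain w where "w \<in> set (nb n (L,i))" "f w + 1 = f (L,i)" using D1 p by blast
    then show "\<exists>w. U_adj n u w \<and> f w + 1 = f u" using nb_adj[OF i] ui by blast
  qed
  show "\<And>u. u \<in> U_verts n \<Longrightarrow> f u = 0 \<Longrightarrow> u = s" using Z by (auto simp: U_verts_def)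
  show "f s = 0" by (rule fs)
  show "u \<in> U_verts n" by (rule u)
qed

lemma main_gen:
  assumes wA: "wA \<in> U_verts n" and wB: "wB \<in> U_verts n"
    and d1: "\<And>u. u \<in> U_verts n \<Longrightarrow> gdist (U_adj n) u wA = gA u"
    and d2: "\<And>u. u \<in> U_verts n \<Longrightarrow> gdist (U_adj n) u wB = gB u"
    and sep: "\<And>i x y. i \<in> {1..n} \<Longrightarrow> (x,y) \<in> E8 n i \<Longrightarrow> gA x \<noteq> gA y \<or> gB x \<noteq> gB y"
  shows "local_resolving_set (U_verts n) (U_adj n) {wA, wB}"
  unfolding local_resolving_set_def
proof (intro conjI ballI impI)
  show "{wA, wB} \<subseteq> U_verts n" using wA wB by simp
  fix u v assume u: "u \<in> U_verts n" and v: "v \<in> U_verts n" and a: "U_adj n u v"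
  then obtain i where i: "i \<in> {1..n}" and "(u,v) \<in> E8 n i \<or> (v,u) \<in> E8 n i" unfolding adj_iff by blast
  then have "gA u \<noteq> gA v \<or> gB u \<noteq> gB v" using sep by metis
  then show "\<exists>w\<in>{wA, wB}. resolves (U_adj n) w u v"
    unfolding resolves_def using d1 d2 u v by auto
qed
definition tE4 :: "vtx \<Rightarrow> nat" where
  "tE4 u = (case fst u of LA \<Rightarrow> [4,4,5,5] | LB \<Rightarrow> [3,3,4,4] | LC \<Rightarrow> [2,2,3,3]
     | LD \<Rightarrow> [1,2,3,2] | LE \<Rightarrow> [0,1,2,1]) ! (snd u - 1)"

definition tD8 :: "vtx \<Rightarrow> nat" where
  "tD8 u = (case fst u of LA \<Rightarrow> [6,5,4,3,3,4,5,6] | LB \<Rightarrow> [5,4,3,2,2,3,4,5]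
     | LC \<Rightarrow> [6,5,3,1,1,3,5,6] | LD \<Rightarrow> [5,4,2,0,2,4,5,6] | LE \<Rightarrow> [4,3,2,1,2,3,4,5]) ! (snd u - 1)"

lemma I4: "{1..4::nat} = {1,2,3,4}" by auto
lemma I6: "{1..6::nat} = {1,2,3,4,5,6}" by auto
lemma I8: "{1..8::nat} = {1,2,3,4,5,6,7,8}" by auto

lemma distE4: "u \<in> U_verts 4 \<Longrightarrow> gdist (U_adj 4) u (LE,1) = tE4 u"
  apply (rule dist_tab)
  apply (simp_all only: I4)
  apply (simp_all add: E8_def nxt_def prv_def nb_def tE4_def all_lbl)
  done

lemma distD8: "u \<in> U_verts 8 \<Longrightarrow> gdist (U_adj 8) u (LD,4) = tD8 u"
  apply (rule dist_tab)
  apply (simp_all only: I8)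
  apply (simp_all add: E8_def nxt_def prv_def nb_def tD8_def all_lbl)
  done

lemma sep4: "i \<in> {1..4} \<Longrightarrow> (x,y) \<in> E8 4 i \<Longrightarrow> fC 4 1 x \<noteq> fC 4 1 y \<or> tE4 x \<noteq> tE4 y"
proof -
  assume a: "i \<in> {1..4}" "(x,y) \<in> E8 4 i"
  have "i = 1 \<or> i = 2 \<or> i = 3 \<or> i = 4" using a(1) by auto
  then show ?thesis using a(2) by (elim disjE; simp add: E8_def nxt_def; elim disjE; simp add: fC_def dc_def cC_def sh_def tE4_def)
qed

lemma sep8: "i \<in> {1..8} \<Longrightarrow> (x,y) \<in> E8 8 i \<Longrightarrow> fC 8 1 x \<noteq> fC 8 1 y \<or> tD8 x \<noteq> tD8 y"
proof -
  assume a: "i \<in> {1..8}" "(x,y) \<in> E8 8 i"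
  have "i = 1 \<or> i = 2 \<or> i = 3 \<or> i = 4 \<or> i = 5 \<or> i = 6 \<or> i = 7 \<or> i = 8" using a(1) by auto
  then show ?thesis using a(2) by (elim disjE; simp add: E8_def nxt_def; elim disjE; simp add: fC_def dc_def cC_def sh_def tD8_def)
qed
theorem lemma4p4:
  fixes k n :: nat
  assumes "k \<ge> 2" and "n = 2 * k"
  shows "local_resolving_set (U_verts n) (U_adj n)
           {(LC, 1), (if k = 2 then (LE, 1) else if k = 3 then (LC, 2)
                      else if k = 4 then (LD, 4) else (LC, k))}"
proof -
  have n3: "n \<ge> 3" using assms by simp
  have s1: "(1::nat) \<in> {1..n}" using n3 by simp
  have c1: "(LC, 1) \<in> U_verts n" using s1 by (simp add: U_verts_def)
  have d1: "\<And>u. u \<in> U_verts n \<Longrightarrow> gdist (U_adj n) u (LC,1) = fC n 1 u" using distC[OF n3 s1] by blast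
  consider "k = 2" | "k = 3" | "k = 4" | "k \<ge> 5" using assms(1) by linarith
  then show ?thesis
  proof cases
    case 1
    then have nn: "n = 4" using assms by simp
    have "local_resolving_set (U_verts 4) (U_adj 4) {(LC, 1), (LE, 1)}"
      by (rule main_gen[where gA = "fC 4 1" and gB = tE4])
         (use c1 d1 distE4 sep4 nn in \<open>auto simp: U_verts_def\<close>)
    then show ?thesis using 1 nn by simp
  next
    case 2
    then have nn: "n = 6" using assms by simp
    have s2: "(2::nat) \<in> {1..n}" using nn by simp
    have "local_resolving_set (U_verts n) (U_adj n) {(LC, 1), (LC, 2)}"
    proof (rule main_gen[where gA = "fC n 1" and gB = "fC n 2"])
      show "(LC, 1) \<in> U_verts n" by (rule c1)
      show "(LC, 2) \<in> U_verts n" using s2 by (simp add: U_verts_def)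
      show "\<And>u. u \<in> U_verts n \<Longrightarrow> gdist (U_adj n) u (LC,1) = fC n 1 u" by (rule d1)
      show "\<And>u. u \<in> U_verts n \<Longrightarrow> gdist (U_adj n) u (LC,2) = fC n 2 u" using distC[OF n3 s2] by blast
      fix i x y assume i: "i \<in> {1..n}" and e: "(x,y) \<in> E8 n i"
      show "fC n 1 x \<noteq> fC n 1 y \<or> fC n 2 x \<noteq> fC n 2 y"
        by (rule sepG[OF assms(1) assms(2) s2 i e]; use i 2 nn in \<open>simp add: sh_def split: if_splits; arith?\<close>)
    qed
    then show ?thesis using 2 by simp
  next
    case 3
    then have nn: "n = 8" using assms by simp
    have "local_resolving_set (U_verts 8) (U_adj 8) {(LC, 1), (LD, 4)}"
      by (rule main_gen[where gA = "fC 8 1" and gB = tD8])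
         (use c1 d1 distD8 sep8 nn in \<open>auto simp: U_verts_def\<close>)
    then show ?thesis using 3 nn by simp
  next
    case 4
    have sk: "k \<in> {1..n}" using assms by simp
    have "local_resolving_set (U_verts n) (U_adj n) {(LC, 1), (LC, k)}"
    proof (rule main_gen[where gA = "fC n 1" and gB = "fC n k"])
      show "(LC, 1) \<in> U_verts n" by (rule c1)
      show "(LC, k) \<in> U_verts n" using sk by (simp add: U_verts_def)
      show "\<And>u. u \<in> U_verts n \<Longrightarrow> gdist (U_adj n) u (LC,1) = fC n 1 u" by (rule d1)
      show "\<And>u. u \<in> U_verts n \<Longrightarrow> gdist (U_adj n) u (LC,k) = fC n k u" using distC[OF n3 sk] by blast
      fix i x y assume i: "i \<in> {1..n}" and e: "(x,y) \<in> E8 n i"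
      show "fC n 1 x \<noteq> fC n 1 y \<or> fC n k x \<noteq> fC n k y"
        by (rule sepG[OF assms(1) assms(2) sk i e]; use i 4 assms(2) in \<open>simp add: sh_def split: if_splits; arith?\<close>)
    qed
    then show ?thesis using 4 by simp
  qed
qed
end
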